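(* Let $x\in\mathbb{R}^n$, $k\ge1$ and $p\in(0,1]$. Suppose we subsample $x$ with probability $p$, i.e. each coordinate $i\in[n]$ is independently kept with probability $p$ and otherwise set to zero, and let $y$ be the resulting subsampled vector. Then with failure probability $e^{-\Omega(k)}$, $$\|y_{-2k}\|_2\le\sqrt{2p}\,\|x_{-k/p}\|_2 .$$
   Context: For a vector $v$ and $s\ge 0$, $v_{-s}$ denotes $v$ with its $s$ largest coordinates in absolute value zeroed out. *)

theory Defs
  imports "HOL-Probability.Probability"
begin

text \<open>Vectors in R^n are represented as functions nat => real; only the
coordinates in {..<n} matter.\<close>

definition l2norm :: "nat \<Rightarrow> (nat \<Rightarrow> real) \<Rightarrow> real" where
  "l2norm n x = sqrt (\<Sum>i<n. (x i)\<^sup>2)"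

definition top_set :: "nat \<Rightarrow> nat \<Rightarrow> (nat \<Rightarrow> real) \<Rightarrow> nat set" where
  "top_set n s x = (SOME T. T \<subseteq> {..<n} \<and> card T = min s n \<and>
      (\<forall>i\<in>T. \<forall>j\<in>{..<n} - T. \<bar>x j\<bar> \<le> \<bar>x i\<bar>))"

text \<open>x_{-s}: x with its s largest coordinates in absolute value zeroed out.\<close>
definition drop_top :: "nat \<Rightarrow> nat \<Rightarrow> (nat \<Rightarrow> real) \<Rightarrow> (nat \<Rightarrow> real)" where
  "drop_top n s x = (\<lambda>i. if i \<in> top_set n s x then 0 else x i)"

definition subsample_mask :: "nat \<Rightarrow> real \<Rightarrow> (nat \<Rightarrow> bool) pmf" where
  "subsample_mask n p = Pi_pmf {..<n} False (\<lambda>_. bernoulli_pmf p)"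

definition apply_mask :: "(nat \<Rightarrow> bool) \<Rightarrow> (nat \<Rightarrow> real) \<Rightarrow> (nat \<Rightarrow> real)" where
  "apply_mask S x = (\<lambda>i. if S i then x i else 0)"

end

theory Submission
  imports Defs "HOL-Analysis.Harmonic_Numbers"
begin

lemma sum_if_out:
  fixes f :: "nat \<Rightarrow> real"
  assumes "T \<subseteq> {..<n}"
  shows "(\<Sum>i<n. if i\<in>T then 0 else f i) = sum f {..<n} - sum f T"
proof -
  have "(\<Sum>i<n. if i\<in>T then 0 else f i) = (\<Sum>i\<in>{..<n}-T. f i)"
    by (simp add: sum.If_cases Diff_eq Int_commute)
  also have "\<dots> = sum f {..<n} - sum f T" using assms by (simp add: sum_diff)
  finally show ?thesis .
qed

lemma swap_le:
  fixes f :: "nat \<Rightarrow> real"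
  assumes fin: "finite T" "finite R" and c: "card R \<le> card T"
    and dom: "\<And>i j. i \<in> T \<Longrightarrow> j \<in> R - T \<Longrightarrow> f j \<le> f i"
    and nn: "\<And>i. 0 \<le> f i"
  shows "sum f R \<le> sum f T"
proof -
  have sR: "sum f R = sum f (R \<inter> T) + sum f (R - T)"
    using fin by (metis Diff_Int_distrib2 Int_Diff_Un Int_Diff_disjoint Int_absorb finite_Int sum.union_disjoint finite_Diff)
  have sT: "sum f T = sum f (R \<inter> T) + sum f (T - R)"
    using fin by (metis Int_Diff_Un Int_Diff_disjoint Int_commute finite_Diff finite_Int sum.union_disjoint)
  have cR: "card R = card (R \<inter> T) + card (R - T)"
    using fin by (metis Int_Diff_Un Int_Diff_disjoint card_Un_disjoint finite_Diff finite_Int)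
  have cT: "card T = card (R \<inter> T) + card (T - R)"
    using fin by (metis Int_Diff_Un Int_Diff_disjoint Int_commute card_Un_disjoint finite_Diff finite_Int)
  have cc: "card (R - T) \<le> card (T - R)" using c cR cT by linarith
  have "sum f (R - T) \<le> sum f (T - R)"
  proof (cases "R - T = {}")
    case True
    then have "sum f (R - T) = 0" by (metis sum.empty)
    then show ?thesis using nn by (simp add: sum_nonneg)
  next
    case False
    then have "card (R - T) > 0" using fin by auto
    then have ne: "T - R \<noteq> {}" using cc by (metis card.empty not_gr0 le_zero_eq)
    define a where "a = Min (f ` (T - R))"
    have fTR: "finite (T - R)" using fin by auto
    have a_in: "a \<in> f ` (T - R)" unfolding a_def using ne fTR by (intro Min_in) auto
    have a_le: "\<And>i. i \<in> T - R \<Longrightarrow> a \<le> f i" unfolding a_def using fTR by auto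
    have "sum f (R - T) \<le> sum (\<lambda>_. a) (R - T)"
      using a_in dom by (intro sum_mono) auto
    also have "\<dots> = card (R - T) * a" by simp
    also have "\<dots> \<le> card (T - R) * a"
      using cc a_in nn by (intro mult_right_mono) auto
    also have "\<dots> = sum (\<lambda>_. a) (T - R)" by simp
    also have "\<dots> \<le> sum f (T - R)" using a_le by (intro sum_mono) auto
    finally show ?thesis .
  qed
  then show ?thesis using sR sT by linarith
qed

definition valid_top :: "nat \<Rightarrow> nat \<Rightarrow> (nat \<Rightarrow> real) \<Rightarrow> nat set \<Rightarrow> bool" where
  "valid_top n s x T \<longleftrightarrow> T \<subseteq> {..<n} \<and> card T = min s n \<and>
      (\<forall>i\<in>T. \<forall>j\<in>{..<n} - T. \<bar>x j\<bar> \<le> \<bar>x i\<bar>)"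

lemma top_opt:
  assumes v: "valid_top n s x T" and R: "R \<subseteq> {..<n}" "card R \<le> min s n"
  shows "(\<Sum>i<n. if i\<in>T then 0 else (x i)\<^sup>2) \<le> (\<Sum>i<n. if i\<in>R then 0 else (x i)\<^sup>2)"
proof -
  have T: "T \<subseteq> {..<n}" "card T = min s n" and dom: "\<forall>i\<in>T. \<forall>j\<in>{..<n} - T. \<bar>x j\<bar> \<le> \<bar>x i\<bar>"
    using v by (auto simp: valid_top_def)
  have "sum (\<lambda>i. (x i)\<^sup>2) R \<le> sum (\<lambda>i. (x i)\<^sup>2) T"
  proof (rule swap_le)
    show "finite T" "finite R" using T R finite_subset by auto
    show "card R \<le> card T" using T R by simp
    fix i j assume "i \<in> T" "j \<in> R - T"
    then have "\<bar>x j\<bar> \<le> \<bar>x i\<bar>" using dom R by auto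
    then show "(x j)\<^sup>2 \<le> (x i)\<^sup>2" by (simp add: abs_le_square_iff)
  qed simp
  then show ?thesis using sum_if_out[OF T(1)] sum_if_out[OF R(1)] by simp
qed

lemma l2norm_drop: "l2norm n (drop_top n s x) = sqrt (\<Sum>i<n. if i \<in> top_set n s x then 0 else (x i)\<^sup>2)"
  unfolding l2norm_def drop_top_def by (intro arg_cong[where f=sqrt] sum.cong) auto

lemma abel_identity:
  fixes d v :: "nat \<Rightarrow> real"
  shows "(\<Sum>j<n. d j * v j) = (\<Sum>j<n. (\<Sum>i<Suc j. d i) * (v j - v (Suc j))) + (\<Sum>i<n. d i) * v n"
  by (induction n) (simp_all add: algebra_simps)

lemma abel_le:
  fixes v w u :: "nat \<Rightarrow> real"
  assumes dec: "\<And>j. v (Suc j) \<le> v j" and nn: "\<And>j. 0 \<le> v j"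
    and pre: "\<And>r. r \<le> n \<Longrightarrow> (\<Sum>j<r. w j) \<le> (\<Sum>j<r. u j)"
  shows "(\<Sum>j<n. w j * v j) \<le> (\<Sum>j<n. u j * v j)"
proof -
  define d where "d j = u j - w j" for j
  have D: "0 \<le> (\<Sum>i<r. d i)" if "r \<le> n" for r
    using pre[OF that] by (simp add: d_def sum_subtractf)
  have "0 \<le> (\<Sum>j<n. (\<Sum>i<Suc j. d i) * (v j - v (Suc j))) + (\<Sum>i<n. d i) * v n"
  proof (intro add_nonneg_nonneg sum_nonneg)
    fix j assume "j \<in> {..<n}"
    then show "0 \<le> (\<Sum>i<Suc j. d i) * (v j - v (Suc j))"
      using D[of "Suc j"] dec[of j] by simp
  next
    show "0 \<le> (\<Sum>i<n. d i) * v n" using D[of n] nn[of n] by simp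
  qed
  then have "0 \<le> (\<Sum>j<n. d j * v j)" by (simp only: abel_identity[of d v n])
  then show ?thesis by (simp add: d_def left_diff_distrib sum_subtractf)
qed

lemma chernoff:
  assumes A: "A \<subseteq> {..<n}" and p: "0 \<le> p" "p \<le> 1"
  shows "measure_pmf.prob (subsample_mask n p) {S. t \<le> real (card {i\<in>A. S i})}
           \<le> exp (p * card A - t * ln 2)"
proof -
  define f :: "nat \<Rightarrow> bool \<Rightarrow> real" where "f i b = (if i \<in> A \<and> b then 2 else 1)" for i b
  define u where "u S = (\<Prod>i<n. f i (S i))" for S :: "nat \<Rightarrow> bool"
  let ?M = "measure_pmf (subsample_mask n p)"
  have u_eq: "u S = 2 ^ card {i\<in>A. S i}" for S
  proof -
    have "u S = (\<Prod>i\<in>{i\<in>{..<n}. i \<in> A \<and> S i}. 2)"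
      unfolding u_def f_def by (subst prod.inter_filter) auto
    also have "{i\<in>{..<n}. i \<in> A \<and> S i} = {i\<in>A. S i}" using A by auto
    finally show ?thesis by simp
  qed
  have fin: "finite (set_pmf (bernoulli_pmf p))"
    by (rule finite_subset[of _ UNIV]) auto
  have int: "integrable ?M u"
    unfolding u_def subsample_mask_def
    by (rule integrable_prod_Pi_pmf) (auto intro: integrable_measure_pmf_finite[OF fin])
  have E: "measure_pmf.expectation (subsample_mask n p) u = (\<Prod>i<n. (if i \<in> A then 1 + p else 1))"
  proof -
    have "measure_pmf.expectation (subsample_mask n p) u =
          (\<Prod>i<n. measure_pmf.expectation (bernoulli_pmf p) (f i))"
      unfolding u_def subsample_mask_def
      by (rule expectation_prod_Pi_pmf) (auto intro: integrable_measure_pmf_finite[OF fin] simp: f_def)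
    also have "\<dots> = (\<Prod>i<n. (if i \<in> A then 1 + p else 1))"
      using p by (intro prod.cong) (auto simp: f_def)
    finally show ?thesis .
  qed
  also have "\<dots> = (1 + p) ^ card A"
  proof -
    have "(\<Prod>i<n. (if i \<in> A then 1 + p else 1)) = (\<Prod>i\<in>{i\<in>{..<n}. i \<in> A}. 1 + p)"
      by (subst prod.inter_filter) auto
    also have "{i\<in>{..<n}. i \<in> A} = A" using A by auto
    finally show ?thesis by simp
  qed
  also have "\<dots> \<le> exp p ^ card A"
    using p by (intro power_mono) auto
  also have "\<dots> = exp (p * card A)" by (simp add: exp_of_nat_mult[symmetric] mult.commute)
  finally have Eb: "measure_pmf.expectation (subsample_mask n p) u \<le> exp (p * card A)" .
  have "{S. t \<le> real (card {i\<in>A. S i})} \<subseteq> {S \<in> space ?M. 2 powr t \<le> u S}"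
  proof
    fix S assume "S \<in> {S. t \<le> real (card {i\<in>A. S i})}"
    then have "2 powr t \<le> 2 powr real (card {i\<in>A. S i})" by simp
    also have "\<dots> = u S" by (simp add: u_eq powr_realpow)
    finally show "S \<in> {S \<in> space ?M. 2 powr t \<le> u S}" by simp
  qed
  then have "measure_pmf.prob (subsample_mask n p) {S. t \<le> real (card {i\<in>A. S i})}
        \<le> measure ?M {S \<in> space ?M. 2 powr t \<le> u S}"
    by (intro measure_pmf.finite_measure_mono) auto
  also have "\<dots> \<le> measure_pmf.expectation (subsample_mask n p) u / 2 powr t"
    by (rule integral_Markov_inequality_measure[OF int]) (auto simp: u_eq)
  also have "\<dots> \<le> exp (p * card A) / 2 powr t"
    by (intro divide_right_mono Eb) auto
  also have "\<dots> = exp (p * card A - t * ln 2)"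
    by (simp add: powr_def exp_diff mult.commute)
  finally show ?thesis .
qed

definition sl :: "nat \<Rightarrow> (nat \<Rightarrow> real) \<Rightarrow> nat list" where
  "sl n x = sort_key (\<lambda>i. - \<bar>x i\<bar>) [0..<n]"

lemma sl_length [simp]: "length (sl n x) = n"
  by (simp add: sl_def)

lemma sl_distinct: "distinct (sl n x)"
  by (simp add: sl_def)

lemma sl_set: "set (sl n x) = {..<n}"
  by (auto simp: sl_def)

lemma sl_mono:
  assumes "a \<le> b" "b < n"
  shows "\<bar>x (sl n x ! b)\<bar> \<le> \<bar>x (sl n x ! a)\<bar>"
proof -
  have "sorted (map (\<lambda>i. - \<bar>x i\<bar>) (sl n x))" by (simp add: sl_def)
  from sorted_nth_mono[OF this assms(1)] assms show ?thesis by simp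
qed

lemma sl_in_take:
  assumes "r < n"
  shows "(sl n x ! r \<in> set (take m (sl n x))) = (r < m)"
proof -
  have d: "distinct (sl n x)" by (rule sl_distinct)
  show ?thesis
  proof
    assume "sl n x ! r \<in> set (take m (sl n x))"
    then obtain a where a: "a < length (take m (sl n x))" "take m (sl n x) ! a = sl n x ! r"
      by (auto simp: in_set_conv_nth)
    then have "sl n x ! a = sl n x ! r" "a < n" "a < m" by auto
    with d assms have "a = r" using nth_eq_iff_index_eq by fastforce
    with a show "r < m" by simp
  next
    assume "r < m"
    then show "sl n x ! r \<in> set (take m (sl n x))" using assms
      by (metis in_set_conv_nth length_take min_less_iff_conj nth_take sl_length)
  qed
qed

lemma sl_valid: "valid_top n s x (set (take s (sl n x)))"
  unfolding valid_top_def
proof (intro conjI ballI)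
  show "set (take s (sl n x)) \<subseteq> {..<n}" using sl_set set_take_subset by metis
  show "card (set (take s (sl n x))) = min s n"
    by (simp add: distinct_card sl_distinct)
  fix i j assume i: "i \<in> set (take s (sl n x))" and j: "j \<in> {..<n} - set (take s (sl n x))"
  from i obtain a where a: "a < n" "a < s" "i = sl n x ! a"
    by (auto simp: in_set_conv_nth)
  from j have "j \<in> set (sl n x)" by (simp add: sl_set)
  then obtain b where b: "b < n" "j = sl n x ! b" by (auto simp: in_set_conv_nth)
  with j sl_in_take[OF b(1)] have "\<not> b < s" by auto
  with a b show "\<bar>x j\<bar> \<le> \<bar>x i\<bar>" using sl_mono[of a b n x] by simp
qed

lemma top_set_valid: "valid_top n s x (top_set n s x)"
proof -
  have "\<exists>T. valid_top n s x T" using sl_valid by blast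
  then show ?thesis unfolding top_set_def valid_top_def[symmetric] by (rule someI_ex)
qed


definition cnt :: "nat \<Rightarrow> (nat \<Rightarrow> real) \<Rightarrow> (nat \<Rightarrow> bool) \<Rightarrow> nat \<Rightarrow> nat" where
  "cnt n x S r = card {j. j < r \<and> j < n \<and> S (sl n x ! j)}"

lemma cnt_Suc: "cnt n x S (Suc r) = cnt n x S r + (if r < n \<and> S (sl n x ! r) then 1 else 0)"
proof -
  have "{j. j < Suc r \<and> j < n \<and> S (sl n x ! j)} =
        {j. j < r \<and> j < n \<and> S (sl n x ! j)} \<union> (if r < n \<and> S (sl n x ! r) then {r} else {})"
    by (auto simp: less_Suc_eq)
  then show ?thesis unfolding cnt_def by (auto simp: card_insert_if)
qed

lemma cnt_mono: "r \<le> r' \<Longrightarrow> cnt n x S r \<le> cnt n x S r'"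
  unfolding cnt_def by (intro card_mono) auto

lemma cnt_le: "cnt n x S r \<le> n"
proof -
  have "cnt n x S r \<le> card {..<n}" unfolding cnt_def by (intro card_mono) auto
  then show ?thesis by simp
qed

lemma w_prefix:
  "(\<Sum>j<r. if (j < n \<and> S (sl n x ! j)) \<and> K \<le> cnt n x S j then 1 else 0) = real (cnt n x S r - K)"
proof (induction r)
  case 0
  then show ?case by (simp add: cnt_def)
next
  case (Suc r)
  then show ?case by (auto simp: cnt_Suc of_nat_diff)
qed

lemma u_prefix:
  "(\<Sum>j<r. if m \<le> j then c else 0) = c * real (r - m)"
  by (induction r) (auto simp: algebra_simps Suc_diff_le)

lemma det:
  fixes x :: "nat \<Rightarrow> real"
  assumes p: "0 \<le> p" and H: "\<And>r. real (cnt n x S r - K) \<le> 2*p*real(r - m)"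
  shows "(\<Sum>i<n. if i \<in> top_set n K (apply_mask S x) then 0 else (apply_mask S x i)\<^sup>2)
         \<le> 2*p*(\<Sum>i<n. if i \<in> top_set n m x then 0 else (x i)\<^sup>2)"
proof -
  define xs where "xs = sl n x"
  define v where "v r = (if r < n then (x (xs!r))\<^sup>2 else 0)" for r
  define w where "w j = (if (j < n \<and> S (sl n x ! j)) \<and> K \<le> cnt n x S j then 1 else 0::real)" for j
  define u where "u j = (if m \<le> j then 2*p else 0::real)" for j
  define y where "y = apply_mask S x"
  have bij: "bij_betw ((!) xs) {..<n} {..<n}"
    unfolding xs_def by (rule bij_betw_nth) (auto simp: sl_distinct sl_set)
  have inj: "inj_on ((!) xs) {..<n}" using bij by (rule bij_betw_imp_inj_on)
  have nn: "0 \<le> v j" for j by (simp add: v_def)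
  have dec: "v (Suc j) \<le> v j" for j
  proof (cases "Suc j < n")
    case True
    then have "\<bar>x (xs ! Suc j)\<bar> \<le> \<bar>x (xs ! j)\<bar>" unfolding xs_def by (intro sl_mono) auto
    then show ?thesis using True by (simp add: v_def abs_le_square_iff)
  next
    case False
    then show ?thesis using nn[of j] by (simp add: v_def)
  qed
  have abel: "(\<Sum>j<n. w j * v j) \<le> (\<Sum>j<n. u j * v j)"
  proof (rule abel_le[where v=v])
    show "\<And>j. v (Suc j) \<le> v j" by (rule dec)
    show "\<And>j. 0 \<le> v j" by (rule nn)
  next
    fix r assume "r \<le> n"
    have "(\<Sum>j<r. w j) = real (cnt n x S r - K)" unfolding w_def by (rule w_prefix)
    also have "\<dots> \<le> 2*p*real(r - m)" by (rule H)
    also have "\<dots> = (\<Sum>j<r. u j)" unfolding u_def by (rule u_prefix[symmetric])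
    finally show "(\<Sum>j<r. w j) \<le> (\<Sum>j<r. u j)" .
  qed
  define Rp where "Rp = {r. r < n \<and> S (xs!r) \<and> cnt n x S r < K}"
  define R where "R = (!) xs ` Rp"
  have Rp_sub: "Rp \<subseteq> {..<n}" by (auto simp: Rp_def)
  have finRp: "finite Rp" using Rp_sub finite_subset by blast
  have inj_cnt: "inj_on (cnt n x S) Rp"
  proof (rule inj_onI)
    fix a b assume a: "a \<in> Rp" and b: "b \<in> Rp" and e: "cnt n x S a = cnt n x S b"
    have lt: False if "r \<in> Rp" "r' \<in> Rp" "r < r'" "cnt n x S r = cnt n x S r'" for r r'
    proof -
      have "cnt n x S (Suc r) \<le> cnt n x S r'" using that(3) by (intro cnt_mono) simp
      moreover have "cnt n x S (Suc r) = cnt n x S r + 1"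
        using that(1) by (simp add: cnt_Suc Rp_def xs_def)
      ultimately show False using that(4) by simp
    qed
    show "a = b"
      using lt[OF a b] lt[OF b a] e by (metis linorder_neqE_nat)
  qed
  have "card Rp \<le> card {..<K}"
    by (rule card_inj_on_le[OF inj_cnt]) (auto simp: Rp_def)
  then have cRp: "card Rp \<le> K" by simp
  have R_sub: "R \<subseteq> {..<n}"
    using Rp_sub bij unfolding R_def bij_betw_def by blast
  have cR: "card R \<le> min K n"
  proof -
    have "card R \<le> card Rp" unfolding R_def using finRp by (rule card_image_le)
    moreover have "card R \<le> card {..<n}" using R_sub by (intro card_mono) auto
    ultimately show ?thesis using cRp by simp
  qed
  have "(\<Sum>i<n. if i \<in> top_set n K y then 0 else (y i)\<^sup>2)
        \<le> (\<Sum>i<n. if i \<in> R then 0 else (y i)\<^sup>2)"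
    by (rule top_opt[OF top_set_valid R_sub cR])
  also have "\<dots> = (\<Sum>r<n. if xs!r \<in> R then 0 else (y (xs!r))\<^sup>2)"
    by (rule sum.reindex_bij_betw[OF bij, symmetric])
  also have "\<dots> = (\<Sum>r<n. w r * v r)"
  proof (rule sum.cong)
    fix r assume r: "r \<in> {..<n}"
    have "(xs!r \<in> R) = (r \<in> Rp)" unfolding R_def using inj Rp_sub r by (metis inj_on_image_mem_iff)
    then show "(if xs!r \<in> R then 0 else (y (xs!r))\<^sup>2) = w r * v r"
      using r by (auto simp: Rp_def w_def v_def y_def apply_mask_def xs_def)
  qed simp
  also have "\<dots> \<le> (\<Sum>j<n. u j * v j)" by (rule abel)
  also have "\<dots> = 2*p*(\<Sum>r<n. if r < m then 0 else v r)"
    by (auto simp: sum_distrib_left u_def intro!: sum.cong)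
  also have "(\<Sum>r<n. if r < m then 0 else v r) = (\<Sum>r<n. if xs!r \<in> set (take m xs) then 0 else (x (xs!r))\<^sup>2)"
    by (intro sum.cong) (auto simp: v_def xs_def sl_in_take)
  also have "\<dots> = (\<Sum>i<n. if i \<in> set (take m xs) then 0 else (x i)\<^sup>2)"
    by (rule sum.reindex_bij_betw[OF bij])
  also have "\<dots> \<le> (\<Sum>i<n. if i \<in> top_set n m x then 0 else (x i)\<^sup>2)"
  proof -
    have tv: "valid_top n m x (top_set n m x)" by (rule top_set_valid)
    show ?thesis unfolding xs_def
      by (rule top_opt[OF sl_valid]) (use tv in \<open>auto simp: valid_top_def\<close>)
  qed
  finally show ?thesis using p unfolding y_def by (simp add: mult_left_mono)
qed

lemma step3:
  assumes L: "0 < L" and p: "0 \<le> p"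
    and H: "\<And>J. real (cnt n x S (m + (J+1)*L)) \<le> real K + 2*p*real(J*L)"
  shows "real (cnt n x S r - K) \<le> 2*p*real(r - m)"
proof -
  define J where "J = (r - m - 1) div L"
  have md: "(r - m - 1) mod L < L" using L by simp
  have dm: "J * L + (r - m - 1) mod L = r - m - 1" unfolding J_def by (rule div_mult_mod_eq)
  have e: "(J+1)*L = J*L + L" by simp
  have r_le: "r \<le> m + (J+1)*L" unfolding e using md dm by linarith
  have JL: "J*L \<le> r - m" using dm by linarith
  have "cnt n x S r \<le> cnt n x S (m + (J+1)*L)" using r_le by (rule cnt_mono)
  then have "real (cnt n x S r) \<le> real K + 2*p*real(J*L)" using H[of J] by linarith
  also have "\<dots> \<le> real K + 2*p*real(r - m)"
  proof -
    have "real(J*L) \<le> real(r-m)" using JL by (simp only: of_nat_le_iff)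
    from mult_left_mono[OF this, of "2*p"] p show ?thesis by simp
  qed
  finally have *: "real (cnt n x S r) \<le> real K + 2*p*real(r - m)" .
  show ?thesis
  proof (cases "cnt n x S r \<le> K")
    case True then show ?thesis using p by simp
  next
    case False
    then have "real (cnt n x S r - K) = real (cnt n x S r) - real K" by (simp add: of_nat_diff)
    then show ?thesis using * by linarith
  qed
qed

lemma cnt_eq: "cnt n x S r = card {i \<in> (!) (sl n x) ` {..<min r n}. S i}"
proof -
  have inj: "inj_on ((!) (sl n x)) {..<n}" by (simp add: inj_on_nth sl_distinct)
  have "{i \<in> (!) (sl n x) ` {..<min r n}. S i} = (!) (sl n x) ` {j. j < r \<and> j < n \<and> S (sl n x ! j)}"
  proof -
    have g: "{i \<in> f ` A. P i} = f ` {j \<in> A. P (f j)}" for f :: "nat \<Rightarrow> nat" and A P by blast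
    have "{j \<in> {..<min r n}. S (sl n x ! j)} = {j. j < r \<and> j < n \<and> S (sl n x ! j)}" by auto
    then show ?thesis by (simp add: g)
  qed
  also have "card \<dots> = cnt n x S r" unfolding cnt_def
    by (rule card_image) (rule inj_on_subset[OF inj], auto)
  finally show ?thesis by simp
qed

lemma card_A: "card ((!) (sl n x) ` {..<min r n}) \<le> r"
proof -
  have inj: "inj_on ((!) (sl n x)) {..<n}" by (simp add: inj_on_nth sl_distinct)
  have "card ((!) (sl n x) ` {..<min r n}) = card {..<min r n}"
    by (rule card_image) (rule inj_on_subset[OF inj], auto)
  then show ?thesis by simp
qed

lemma A_sub: "(!) (sl n x) ` {..<min r n} \<subseteq> {..<n}"
proof (rule image_subsetI)
  fix j assume "j \<in> {..<min r n}"
  then have "sl n x ! j \<in> set (sl n x)" by (intro nth_mem) simp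
  then show "sl n x ! j \<in> {..<n}" using sl_set[of n x] by simp
qed

lemma main_bound:
  fixes n :: nat and x :: "nat \<Rightarrow> real" and k :: nat and p :: real
  assumes k: "1 \<le> k" and p: "0 < p" and p1: "p \<le> 1"
  shows "measure_pmf.prob (subsample_mask n p)
          {S. \<not> (l2norm n (drop_top n (2 * k) (apply_mask S x))
                  \<le> sqrt (2 * p) * l2norm n (drop_top n (nat \<lceil>real k / p\<rceil>) x))}
        \<le> (exp 2 / (1 - exp(-1/18::real))) * exp (- (1/6) * real k)"
proof -
    define C where "C = exp 2 / (1 - exp(-1/18::real))"
    have q1: "exp(-1/18::real) < 1" by simp
    define m where "m = nat \<lceil>real k / p\<rceil>"
    define L where "L = nat \<lceil>real k / (6*p)\<rceil>"
    define PL where "PL = p * real L"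
    define A where "A J = (!) (sl n x) ` {..<min (m + (J+1)*L) n}" for J
    define t where "t J = real (2*k) + 2*p*real(J*L)" for J
    define B where "B J = {S. t J \<le> real (card {i \<in> A J. S i})}" for J
    have kp: "0 \<le> real k / p" using p by simp
    have kp6: "0 \<le> real k / (6*p)" using p by simp
    have m1: "real m = of_int \<lceil>real k / p\<rceil>" unfolding m_def using kp by simp
    have L1: "real L = of_int \<lceil>real k / (6*p)\<rceil>" unfolding L_def using kp6 by simp
    have pm: "p * real m \<le> real k + 1"
    proof -
      have "real m \<le> real k / p + 1" using m1 by simp
      then have "p * real m \<le> p * (real k / p + 1)" using p by (intro mult_left_mono) auto
      also have "\<dots> = real k + p" using p by (simp add: field_simps)
      finally show ?thesis using p1 by simp
    qed
    have PL1: "real k / 6 \<le> PL"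
    proof -
      have "real k / (6*p) \<le> real L" using L1 by simp
      then have "p * (real k / (6*p)) \<le> p * real L" using p by (intro mult_left_mono) auto
      then show ?thesis unfolding PL_def using p by (simp add: field_simps)
    qed
    have PL2: "PL \<le> real k / 6 + 1"
    proof -
      have "real L \<le> real k / (6*p) + 1" using L1 by simp
      then have "p * real L \<le> p * (real k / (6*p) + 1)" using p by (intro mult_left_mono) auto
      also have "\<dots> = real k / 6 + p" using p by (simp add: field_simps)
      finally show ?thesis unfolding PL_def using p1 by simp
    qed
    have Lpos: "0 < L"
    proof -
      have "0 < PL" using PL1 k by linarith
      then show ?thesis unfolding PL_def using p by (simp add: zero_less_mult_iff)
    qed
    have tJ: "t J = 2 * real k + 2 * real J * PL" for J
      unfolding t_def PL_def by simp
    have incl: "{S. \<not> (l2norm n (drop_top n (2 * k) (apply_mask S x))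
                  \<le> sqrt (2 * p) * l2norm n (drop_top n (nat \<lceil>real k / p\<rceil>) x))}
          \<subseteq> (\<Union>J\<in>{..<3*n}. B J)"
    proof
      fix S assume bad: "S \<in> {S. \<not> (l2norm n (drop_top n (2 * k) (apply_mask S x))
                  \<le> sqrt (2 * p) * l2norm n (drop_top n (nat \<lceil>real k / p\<rceil>) x))}"
      show "S \<in> (\<Union>J\<in>{..<3*n}. B J)"
      proof (rule ccontr)
        assume nb: "S \<notin> (\<Union>J\<in>{..<3*n}. B J)"
        have H: "real (cnt n x S (m + (J+1)*L)) \<le> real (2*k) + 2*p*real(J*L)" for J
        proof (cases "J < 3*n")
          case True
          then have "S \<notin> B J" using nb by blast
          then have "real (card {i \<in> A J. S i}) < t J" unfolding B_def by simp
          then show ?thesis unfolding t_def A_def by (simp add: cnt_eq)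
        next
          case False
          have "real (cnt n x S (m + (J+1)*L)) \<le> real n" by (simp add: cnt_le)
          also have "\<dots> \<le> real J / 3" using False by simp
          also have "\<dots> \<le> 2 * real J * PL"
          proof -
            have "real J * (1/6) \<le> real J * PL" using PL1 k
              by (intro mult_left_mono) auto
            then show ?thesis by simp
          qed
          also have "\<dots> \<le> t J" unfolding tJ by simp
          finally show ?thesis unfolding t_def .
        qed
        have H2: "\<And>r. real (cnt n x S r - 2*k) \<le> 2*p*real(r - m)"
          by (rule step3[OF Lpos]) (use p H in auto)
        have sums: "(\<Sum>i<n. if i \<in> top_set n (2*k) (apply_mask S x) then 0 else (apply_mask S x i)\<^sup>2)
         \<le> 2*p*(\<Sum>i<n. if i \<in> top_set n m x then 0 else (x i)\<^sup>2)"
          by (rule det) (use p H2 in auto)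
        have "l2norm n (drop_top n (2 * k) (apply_mask S x))
                  \<le> sqrt (2 * p) * l2norm n (drop_top n m x)"
          unfolding l2norm_drop real_sqrt_mult[symmetric] using sums by simp
        then show False using bad unfolding m_def by simp
      qed
    qed
    have bound: "measure_pmf.prob (subsample_mask n p) (B J) \<le> exp (2 - real k / 6) * exp (- real k / 18) ^ J" for J
    proof -
      have "measure_pmf.prob (subsample_mask n p) (B J) \<le> exp (p * card (A J) - t J * ln 2)"
        unfolding B_def A_def using p p1 by (intro chernoff A_sub) auto
      also have "\<dots> \<le> exp (2 - real k / 6 + real J * (- real k / 18))"
      proof -
        have cA: "real (card (A J)) \<le> real m + real J * real L + real L"
        proof -
          have c0: "card (A J) \<le> m + (J+1)*L" unfolding A_def by (rule card_A)
          have "real (card (A J)) \<le> real (m + (J+1)*L)" using c0 by (simp only: of_nat_le_iff)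
          then show ?thesis by (simp add: algebra_simps)
        qed
        have "p * card (A J) \<le> p * (real m + real J * real L + real L)"
          using cA p by (intro mult_left_mono) auto
        also have "\<dots> = p * real m + real J * PL + PL" unfolding PL_def by (simp add: algebra_simps)
        finally have a1: "p * card (A J) \<le> p * real m + real J * PL + PL" .
        have t0: "0 \<le> t J" unfolding tJ using PL1 by simp
        have a2: "t J * (2/3) \<le> t J * ln 2" using t0 ln2_ge_two_thirds by (intro mult_left_mono) auto
        have a3: "real J * (real k / 6) \<le> real J * PL" using PL1 by (intro mult_left_mono) auto
        show ?thesis using a1 a2 a3 pm PL2 unfolding tJ by (intro exp_mono) (simp add: algebra_simps; linarith)
      qed
      also have "\<dots> = exp (2 - real k / 6) * exp (- real k / 18) ^ J"
        by (simp only: exp_add exp_of_nat_mult)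
      finally show ?thesis .
    qed
    define q where "q = exp (- real k / 18)"
    have q0: "0 \<le> q" unfolding q_def by simp
    have qq: "q \<le> exp (-1/18)" unfolding q_def using k by simp
    have qlt: "q < 1" using qq q1 by linarith
    have "measure_pmf.prob (subsample_mask n p)
          {S. \<not> (l2norm n (drop_top n (2 * k) (apply_mask S x))
                  \<le> sqrt (2 * p) * l2norm n (drop_top n (nat \<lceil>real k / p\<rceil>) x))}
        \<le> measure_pmf.prob (subsample_mask n p) (\<Union>J\<in>{..<3*n}. B J)"
      by (rule measure_pmf.finite_measure_mono[OF incl]) simp
    also have "\<dots> \<le> (\<Sum>J<3*n. measure_pmf.prob (subsample_mask n p) (B J))"
      by (rule measure_pmf.finite_measure_subadditive_finite) auto
    also have "\<dots> \<le> (\<Sum>J<3*n. exp (2 - real k / 6) * q ^ J)"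
      unfolding q_def by (intro sum_mono bound)
    also have "\<dots> = exp (2 - real k / 6) * (\<Sum>J<3*n. q ^ J)" by (simp add: sum_distrib_left)
    also have "(\<Sum>J<3*n. q ^ J) \<le> 1 / (1 - q)"
    proof -
      have "(\<Sum>J<3*n. q ^ J) = (1 - q ^ (3*n)) / (1 - q)" using qlt by (simp add: sum_gp_strict)
      also have "\<dots> \<le> 1 / (1 - q)" using qlt q0 by (intro divide_right_mono) auto
      finally show ?thesis .
    qed
    also have "1 / (1 - q) \<le> 1 / (1 - exp (-1/18))"
      using qq q1 qlt by (intro divide_left_mono mult_pos_pos) auto
    also have "exp (2 - real k / 6) * (1 / (1 - exp (-1/18))) = C * exp (- (1/6) * real k)"
    proof -
      have "exp (2 - real k / 6) = exp 2 * exp (- (1/6) * real k)"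
        by (simp add: exp_add[symmetric])
      then show ?thesis unfolding C_def by simp
    qed
    finally show ?thesis unfolding C_def by simp
qed

theorem lemma1:
  "\<exists>C c. C > 0 \<and> c > 0 \<and>
     (\<forall>(n::nat) (x::nat \<Rightarrow> real) (k::nat) (p::real).
        k \<ge> 1 \<longrightarrow> 0 < p \<longrightarrow> p \<le> 1 \<longrightarrow>
        measure_pmf.prob (subsample_mask n p)
          {S. \<not> (l2norm n (drop_top n (2 * k) (apply_mask S x))
                  \<le> sqrt (2 * p) * l2norm n (drop_top n (nat \<lceil>real k / p\<rceil>) x))}
        \<le> C * exp (- c * real k))"
proof -
  have q1: "exp(-1/18::real) < 1" by simp
  have Cpos: "exp 2 / (1 - exp(-1/18::real)) > 0" using q1 by simp
  show ?thesis
    by (rule exI[of _ "exp 2 / (1 - exp(-1/18::real))"], rule exI[of _ "1/6"])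
       (use Cpos main_bound in auto)
qed

end
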